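(* Let $n\ge 1$, let $p,p_1,\dots,p_n$ be distinct propositional variables and $s\neq *$ a standpoint symbol. Let $C_n$ be the formula $(\neg p_1\wedge\cdots\wedge\neg p_n)\wedge G\big(p_1\wedge\cdots\wedge p_n\to X(\neg p_1\wedge\cdots\wedge\neg p_n)\big)\wedge\bigwedge_{1\le i\le n}G\Big(\big(\neg p_i\wedge\bigwedge_{i<i'\le n}p_{i'}\big)\to\big(\bigwedge_{i<i'\le n}X\neg p_{i'}\wedge Xp_i\wedge\bigwedge_{1\le i'<i}(p_{i'}\leftrightarrow Xp_{i'})\big)\Big)$, and let $\varphi_C=G\big(\Diamond_s(C_n\wedge p\wedge XG\neg p)\big)$. Then $\varphi_C$ is $\mathrm{SLTL}$-satisfiable. Moreover, for every $\mathrm{SLTL}$ model $M=(\Pi,\lambda)$ and $\sigma\in\Pi$ with $M,\sigma,0\models\varphi_C$: (1) $\lambda(s)$ is infinite; (2) for every $i>2^n$ and every $m\in\{0,\dots,2^n-1\}$ there is $\sigma'\in\Pi$ such that $M,\sigma',i\models \mathtt{C}=m$; (3) for every $i>2^n$ there are $\sigma_1,\dots,\sigma_{2^n}\in\Pi$ such that $|\{\sigma_j(i)\cap\{p_1,\dots,p_n\}: j\in\{1,\dots,2^n\}\}|=2^n$.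
   Context: Fix a countably infinite set $\mathcal{P}$ of propositional variables and a countably infinite set $\mathcal{S}$ of standpoint symbols containing a distinguished universal standpoint symbol $*$. SLTL formulae: $\varphi ::= p \mid s \preceq s' \mid \neg\varphi \mid \varphi\wedge\varphi \mid \Diamond_s\varphi \mid \Box_s\varphi \mid X\varphi \mid \varphi\,U\,\varphi$. A model is $M=(\Pi,\lambda)$ with $\Pi\neq\emptyset$ a set of traces $\sigma:\mathbb{N}\to 2^{\mathcal{P}}$ and $\lambda:\mathcal{S}\to 2^{\Pi}\setminus\{\emptyset\}$, $\lambda( * )=\Pi$. Semantics: $M,\sigma,i\models p$ iff $p\in\sigma(i)$; $M,\sigma,i\models s\preceq s'$ iff $\lambda(s)\subseteq\lambda(s')$; Boolean clauses as usual; $M,\sigma,i\models\Diamond_s\psi$ iff $M,\sigma',i\models\psi$ for some $\sigma'\in\lambda(s)$; $\Box_s$ dually with "for all"; $M,\sigma,i\models X\psi$ iff $M,\sigma,i+1\models\psi$; $M,\sigma,i\models\psi\,U\,\chi$ iff there is $i'\ge i$ with $M,\sigma,i'\models\chi$ and $M,\sigma,i''\models\psi$ for all $i\le i''<i'$. $G\psi$ abbreviates $\neg(\top\,U\,\neg\psi)$ ("always in the future, including now"). $\varphi$ is satisfiable iff $M,\sigma,0\models\varphi$ for some model $M=(\Pi,\lambda)$ and $\sigma\in\Pi$. For $m\in\{0,\dots,2^n-1\}$, $M,\sigma,i\models\mathtt{C}=m$ means that the bit string $b_1\cdots b_n$ with $b_j=1$ iff $p_j\in\sigma(i)$ ($b_1$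 most significant) is the binary representation of $m$. *)

theory Defs
  imports Main
begin

datatype stand = Univ | Sp nat

datatype fml =
    Prop nat
  | Sharp stand stand
  | Neg fml
  | And fml fml
  | Dia stand fml
  | Box stand fml
  | Next fml
  | Until fml fml

type_synonym trace = "nat \<Rightarrow> nat set"

definition is_model :: "trace set \<Rightarrow> (stand \<Rightarrow> trace set) \<Rightarrow> bool" where
  "is_model Pi L \<longleftrightarrow> Pi \<noteq> {} \<and> (\<forall>s. L s \<subseteq> Pi \<and> L s \<noteq> {}) \<and> L Univ = Pi"

fun sat :: "trace set \<Rightarrow> (stand \<Rightarrow> trace set) \<Rightarrow> trace \<Rightarrow> nat \<Rightarrow> fml \<Rightarrow> bool" where
  "sat Pi L \<sigma> i (Prop p) = (p \<in> \<sigma> i)"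
| "sat Pi L \<sigma> i (Sharp s s') = (L s \<subseteq> L s')"
| "sat Pi L \<sigma> i (Neg \<psi>) = (\<not> sat Pi L \<sigma> i \<psi>)"
| "sat Pi L \<sigma> i (And \<psi> \<chi>) = (sat Pi L \<sigma> i \<psi> \<and> sat Pi L \<sigma> i \<chi>)"
| "sat Pi L \<sigma> i (Dia s \<psi>) = (\<exists>\<sigma>'\<in>L s. sat Pi L \<sigma>' i \<psi>)"
| "sat Pi L \<sigma> i (Box s \<psi>) = (\<forall>\<sigma>'\<in>L s. sat Pi L \<sigma>' i \<psi>)"
| "sat Pi L \<sigma> i (Next \<psi>) = sat Pi L \<sigma> (Suc i) \<psi>"
| "sat Pi L \<sigma> i (Until \<psi> \<chi>) =
     (\<exists>i'\<ge>i. sat Pi L \<sigma> i' \<chi> \<and> (\<forall>i''. i \<le> i'' \<and> i'' < i' \<longrightarrow> sat Pi L \<sigma> i'' \<psi>))"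

definition Top :: fml where "Top = Neg (And (Prop 0) (Neg (Prop 0)))"
definition Imp :: "fml \<Rightarrow> fml \<Rightarrow> fml" where "Imp a b = Neg (And a (Neg b))"
definition Iff :: "fml \<Rightarrow> fml \<Rightarrow> fml" where "Iff a b = And (Imp a b) (Imp b a)"
definition Glob :: "fml \<Rightarrow> fml" where "Glob \<psi> = Neg (Until Top (Neg \<psi>))"
definition Conj :: "fml list \<Rightarrow> fml" where "Conj xs = foldr And xs Top"

definition satisfiable :: "fml \<Rightarrow> bool" where
  "satisfiable \<phi> \<longleftrightarrow> (\<exists>Pi L \<sigma>. is_model Pi L \<and> \<sigma> \<in> Pi \<and> sat Pi L \<sigma> 0 \<phi>)"

text \<open>The counter formula C_n over variables ps = [p_1, ..., p_n] (0-indexed list: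
p_j = ps ! (j-1)).\<close>

definition counter_fml :: "nat list \<Rightarrow> fml" where
  "counter_fml ps = (let n = length ps; q = (\<lambda>j. Prop (ps ! j)) in
     And (Conj [Neg (q j). j \<leftarrow> [0..<n]])
      (And (Glob (Imp (Conj [q j. j \<leftarrow> [0..<n]]) (Next (Conj [Neg (q j). j \<leftarrow> [0..<n]]))))
        (Conj [Glob (Imp (And (Neg (q i)) (Conj [q i'. i' \<leftarrow> [Suc i..<n]]))
                        (And (Conj [Next (Neg (q i')). i' \<leftarrow> [Suc i..<n]])
                          (And (Next (q i))
                               (Conj [Iff (q i') (Next (q i')). i' \<leftarrow> [0..<i]]))))
               . i \<leftarrow> [0..<n]])))"

definition phi_C :: "nat list \<Rightarrow> nat \<Rightarrow> stand \<Rightarrow> fml" where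
  "phi_C ps p s = Glob (Dia s (And (counter_fml ps) (And (Prop p) (Next (Glob (Neg (Prop p)))))))"

text \<open>Value of the counter at position i of trace sigma: bit string b_1...b_n,
b_j = 1 iff p_j in sigma(i), b_1 most significant.\<close>

definition counter_val :: "nat list \<Rightarrow> trace \<Rightarrow> nat \<Rightarrow> nat" where
  "counter_val ps \<sigma> i = (\<Sum>j<length ps. if ps ! j \<in> \<sigma> i then 2 ^ (length ps - 1 - j) else 0)"

end

theory Submission
  imports Defs
begin
lemma sat_Top[simp]: "sat Pi L \<sigma> i Top" by (simp add: Top_def)
lemma sat_Conj[simp]: "sat Pi L \<sigma> i (Conj xs) \<longleftrightarrow> (\<forall>x\<in>set xs. sat Pi L \<sigma> i x)"
  by (induction xs) (auto simp: Conj_def)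
lemma sat_Glob[simp]: "sat Pi L \<sigma> i (Glob \<psi>) \<longleftrightarrow> (\<forall>t\<ge>i. sat Pi L \<sigma> t \<psi>)"
  by (auto simp: Glob_def)
lemma sat_Imp[simp]: "sat Pi L \<sigma> i (Imp a b) \<longleftrightarrow> (sat Pi L \<sigma> i a \<longrightarrow> sat Pi L \<sigma> i b)"
  by (auto simp: Imp_def)
lemma sat_Iff[simp]: "sat Pi L \<sigma> i (Iff a b) \<longleftrightarrow> (sat Pi L \<sigma> i a \<longleftrightarrow> sat Pi L \<sigma> i b)"
  by (auto simp: Iff_def)

definition STEP :: "nat \<Rightarrow> (nat \<Rightarrow> bool) \<Rightarrow> (nat \<Rightarrow> bool) \<Rightarrow> bool" where
 "STEP n a b \<longleftrightarrow> ((\<forall>j<n. a j) \<longrightarrow> (\<forall>j<n. \<not> b j)) \<and>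
   (\<forall>k<n. (\<not> a k \<and> (\<forall>k'. Suc k \<le> k' \<and> k' < n \<longrightarrow> a k')) \<longrightarrow>
      ((\<forall>k'. Suc k \<le> k' \<and> k' < n \<longrightarrow> \<not> b k') \<and> b k \<and> (\<forall>k'<k. a k' = b k')))"

definition bits :: "nat list \<Rightarrow> trace \<Rightarrow> nat \<Rightarrow> nat \<Rightarrow> bool" where
 "bits ps \<sigma> t = (\<lambda>j. ps ! j \<in> \<sigma> t)"

lemma ball_img: "(\<forall>x\<in>f ` A. P x) = (\<forall>y\<in>A. P (f y))" by blast

lemma STEP_alt: "STEP n a b \<longleftrightarrow> ((\<forall>j\<in>{..<n}. a j) \<longrightarrow> (\<forall>j\<in>{..<n}. \<not> b j)) \<and>
   (\<forall>k\<in>{..<n}. (\<not> a k \<and> (\<forall>k'\<in>{Suc k..<n}. a k')) \<longrightarrow>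
      ((\<forall>k'\<in>{Suc k..<n}. \<not> b k') \<and> b k \<and> (\<forall>k'\<in>{..<k}. a k' = b k')))"
  unfolding STEP_def Ball_def lessThan_iff atLeastLessThan_iff by (rule refl)

lemma sat_counter: "sat Pi L \<sigma> i (counter_fml ps) \<longleftrightarrow>
  (\<forall>j<length ps. \<not> bits ps \<sigma> i j) \<and> (\<forall>t\<ge>i. STEP (length ps) (bits ps \<sigma> t) (bits ps \<sigma> (Suc t)))"
  unfolding counter_fml_def Let_def STEP_alt bits_def
  apply (simp add: atLeast0LessThan ball_img del: ball_simps)
  apply blast
  done

definition V :: "(nat \<Rightarrow> bool) \<Rightarrow> nat \<Rightarrow> nat" where
  "V a n = (\<Sum>j<n. if a j then 2 ^ (n - 1 - j) else 0)"

lemma geo: "k \<le> n \<Longrightarrow> (\<Sum>j\<in>{k..<n}. (2::nat) ^ (n - 1 - j)) + 1 = 2 ^ (n - k)"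
proof (induction "n - k" arbitrary: k)
  case 0 then show ?case by simp
next
  case (Suc d)
  then have kn: "k < n" by simp
  have "(\<Sum>j\<in>{k..<n}. (2::nat) ^ (n - 1 - j)) = 2 ^ (n - 1 - k) + (\<Sum>j\<in>{Suc k..<n}. 2 ^ (n - 1 - j))"
    using kn by (simp add: sum.atLeast_Suc_lessThan)
  moreover have "(\<Sum>j\<in>{Suc k..<n}. (2::nat) ^ (n - 1 - j)) + 1 = 2 ^ (n - Suc k)"
  proof -
    have "d = n - Suc k" using Suc.hyps(2) by linarith
    moreover have "Suc k \<le> n" using kn by simp
    ultimately show ?thesis by (rule Suc.hyps(1))
  qed
  moreover have "(2::nat) ^ (n - 1 - k) + 2 ^ (n - Suc k) = 2 ^ (n - k)"
  proof -
    have e1: "n - 1 - k = n - Suc k" by simp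
    have e2: "n - k = Suc (n - Suc k)" using kn by simp
    show ?thesis unfolding e1 e2 by simp
  qed
  ultimately show ?case by simp
qed

lemma split_sum: "(k::nat) < n \<Longrightarrow> sum f {..<n} = sum f {..<k} + f k + sum f {Suc k..<n}"
proof -
  assume kn: "k < n"
  have "sum f {..<n} = sum f {0..<k} + sum f {k..<n}"
    using kn by (simp add: lessThan_atLeast0 sum.atLeastLessThan_concat)
  also have "sum f {k..<n} = f k + sum f {Suc k..<n}" using kn by (simp add: sum.atLeast_Suc_lessThan)
  finally show ?thesis by (simp add: lessThan_atLeast0 add.assoc)
qed

lemma V_all: "(\<forall>j<n. a j) \<Longrightarrow> V a n + 1 = 2 ^ n"
  using geo[of 0 n] by (simp add: V_def lessThan_atLeast0)

lemma V_lt: "V a n < 2 ^ n"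
proof -
  have "V a n \<le> V (\<lambda>_. True) n" unfolding V_def by (rule sum_mono) simp
  with V_all[of n "\<lambda>_. True"] show ?thesis by simp
qed

lemma V_zero: "(\<forall>j<n. \<not> a j) \<Longrightarrow> V a n = 0"
  by (simp add: V_def)

lemma V_cong: "(\<forall>j<n. a j = b j) \<Longrightarrow> V a n = V b n"
  unfolding V_def by (rule sum.cong) auto

lemma incr: assumes "STEP n a b" shows "V b n = (V a n + 1) mod 2 ^ n"
proof (cases "\<forall>j<n. a j")
  case True
  then have "\<forall>j<n. \<not> b j" using assms by (simp add: STEP_def)
  then show ?thesis using V_all[OF True] V_zero by simp
next
  case False
  define k where "k = Max {j. j < n \<and> \<not> a j}"
  have fin: "finite {j. j < n \<and> \<not> a j}" by simp
  have ne: "{j. j < n \<and> \<not> a j} \<noteq> {}" using False by auto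
  have k: "k < n" "\<not> a k" using Max_in[OF fin ne] unfolding k_def by auto
  have after: "\<forall>k'. Suc k \<le> k' \<and> k' < n \<longrightarrow> a k'"
  proof (intro allI impI)
    fix k' assume h: "Suc k \<le> k' \<and> k' < n"
    show "a k'"
    proof (rule ccontr)
      assume "\<not> a k'"
      then have "k' \<le> k" using Max_ge[OF fin] h unfolding k_def by auto
      with h show False by simp
    qed
  qed
  have bb: "(\<forall>k'. Suc k \<le> k' \<and> k' < n \<longrightarrow> \<not> b k') \<and> b k \<and> (\<forall>k'<k. a k' = b k')"
  proof -
    have "\<forall>k<n. (\<not> a k \<and> (\<forall>k'. Suc k \<le> k' \<and> k' < n \<longrightarrow> a k')) \<longrightarrow>
      ((\<forall>k'. Suc k \<le> k' \<and> k' < n \<longrightarrow> \<not> b k') \<and> b k \<and> (\<forall>k'<k. a k' = b k'))"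
      using assms unfolding STEP_def by (rule conjunct2)
    note hk = this
    have "(\<not> a k \<and> (\<forall>k'. Suc k \<le> k' \<and> k' < n \<longrightarrow> a k')) \<longrightarrow>
      ((\<forall>k'. Suc k \<le> k' \<and> k' < n \<longrightarrow> \<not> b k') \<and> b k \<and> (\<forall>k'<k. a k' = b k'))"
      using spec[OF hk, of k] k(1) by (rule mp)
    moreover have "\<not> a k \<and> (\<forall>k'. Suc k \<le> k' \<and> k' < n \<longrightarrow> a k')" using k(2) after by (rule conjI)
    ultimately show ?thesis by (rule mp)
  qed
  let ?f = "\<lambda>c j. if c j then (2::nat) ^ (n - 1 - j) else 0"
  have s1: "sum (?f a) {Suc k..<n} = sum (\<lambda>j. 2 ^ (n - 1 - j)) {Suc k..<n}"
    by (rule sum.cong) (use after in auto)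
  have s2: "sum (?f b) {..<k} = sum (?f a) {..<k}"
    by (rule sum.cong) (use bb in auto)
  have s3: "sum (?f b) {Suc k..<n} = 0"
    by (rule sum.neutral) (use bb in auto)
  have Sa: "V a n = sum (?f a) {..<k} + 0 + sum (\<lambda>j. 2 ^ (n - 1 - j)) {Suc k..<n}"
    unfolding V_def split_sum[OF k(1)] s1 using k(2) by simp
  have Sb: "V b n = sum (?f a) {..<k} + 2 ^ (n - 1 - k) + 0"
    unfolding V_def split_sum[OF k(1)] s2 s3 using bb by simp
  have "V b n = V a n + 1" using Sa Sb geo[of "Suc k" n] k(1) by simp
  then show ?thesis using V_lt[of b n] by simp
qed

definition succ :: "nat \<Rightarrow> (nat \<Rightarrow> bool) \<Rightarrow> (nat \<Rightarrow> bool)" where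
  "succ n a = (if \<forall>j<n. a j then (\<lambda>_. False)
     else (let k = Max {j. j < n \<and> \<not> a j} in (\<lambda>j. if j < k then a j else j = k)))"

lemma STEP_succ: "STEP n a (succ n a)"
proof (cases "\<forall>j<n. a j")
  case True then show ?thesis by (auto simp: STEP_def succ_def)
next
  case False
  define k where "k = Max {j. j < n \<and> \<not> a j}"
  have fin: "finite {j. j < n \<and> \<not> a j}" by simp
  have ne: "{j. j < n \<and> \<not> a j} \<noteq> {}" using False by auto
  have k: "k < n" "\<not> a k" using Max_in[OF fin ne] unfolding k_def by auto
  have s: "succ n a = (\<lambda>j. if j < k then a j else j = k)"
    using False unfolding succ_def k_def Let_def by (simp only: if_False)
  have uniq: "k0 = k" if "k0 < n" "\<not> a k0" "\<forall>k'. Suc k0 \<le> k' \<and> k' < n \<longrightarrow> a k'" for k0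
  proof -
    have "k0 \<le> k" using Max_ge[OF fin] that unfolding k_def by auto
    moreover have "\<not> k0 < k" using that k by auto
    ultimately show ?thesis by simp
  qed
  show ?thesis unfolding STEP_def s
  proof (intro conjI)
    show "(\<forall>j<n. a j) \<longrightarrow> (\<forall>j<n. \<not> (if j < k then a j else j = k))" using False by blast
    show "\<forall>k0<n. \<not> a k0 \<and> (\<forall>k'. Suc k0 \<le> k' \<and> k' < n \<longrightarrow> a k') \<longrightarrow>
      (\<forall>k'. Suc k0 \<le> k' \<and> k' < n \<longrightarrow> \<not> (if k' < k then a k' else k' = k)) \<and>
      (if k0 < k then a k0 else k0 = k) \<and> (\<forall>k'<k0. a k' = (if k' < k then a k' else k' = k))"
    proof (intro allI impI)
      fix k0 assume k0: "k0 < n" "\<not> a k0 \<and> (\<forall>k'. Suc k0 \<le> k' \<and> k' < n \<longrightarrow> a k')"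
      then have e: "k0 = k" using uniq by blast
      show "(\<forall>k'. Suc k0 \<le> k' \<and> k' < n \<longrightarrow> \<not> (if k' < k then a k' else k' = k)) \<and>
      (if k0 < k then a k0 else k0 = k) \<and> (\<forall>k'<k0. a k' = (if k' < k then a k' else k' = k))"
        using e by auto
    qed
  qed
qed

primrec B :: "nat \<Rightarrow> nat \<Rightarrow> nat \<Rightarrow> bool" where
  "B n 0 = (\<lambda>_. False)"
| "B n (Suc m) = succ n (B n m)"

definition tau :: "nat list \<Rightarrow> nat \<Rightarrow> nat \<Rightarrow> trace" where
  "tau ps p i t = (if t = i then {p} else {}) \<union> {ps ! j | j. j < length ps \<and> B (length ps) (t - i) j}"

lemma STEP_cong: assumes "STEP n a b" "\<forall>j<n. a' j = a j" "\<forall>j<n. b' j = b j" shows "STEP n a' b'"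
proof -
  have A: "(\<forall>j<n. a j) \<longrightarrow> (\<forall>j<n. \<not> b j)" using assms(1) unfolding STEP_def by (rule conjunct1)
  have C: "\<forall>k<n. (\<not> a k \<and> (\<forall>k'. Suc k \<le> k' \<and> k' < n \<longrightarrow> a k')) \<longrightarrow>
      ((\<forall>k'. Suc k \<le> k' \<and> k' < n \<longrightarrow> \<not> b k') \<and> b k \<and> (\<forall>k'<k. a k' = b k'))"
    using assms(1) unfolding STEP_def by (rule conjunct2)
  show ?thesis unfolding STEP_def
  proof (intro conjI)
    show "(\<forall>j<n. a' j) \<longrightarrow> (\<forall>j<n. \<not> b' j)" using A assms(2,3) by simp
    show "\<forall>k<n. (\<not> a' k \<and> (\<forall>k'. Suc k \<le> k' \<and> k' < n \<longrightarrow> a' k')) \<longrightarrow>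
      ((\<forall>k'. Suc k \<le> k' \<and> k' < n \<longrightarrow> \<not> b' k') \<and> b' k \<and> (\<forall>k'<k. a' k' = b' k'))"
    proof (intro allI impI)
      fix k assume k: "k < n" "\<not> a' k \<and> (\<forall>k'. Suc k \<le> k' \<and> k' < n \<longrightarrow> a' k')"
      have "\<not> a k \<and> (\<forall>k'. Suc k \<le> k' \<and> k' < n \<longrightarrow> a k')" using k assms(2) by simp
      then have r: "(\<forall>k'. Suc k \<le> k' \<and> k' < n \<longrightarrow> \<not> b k') \<and> b k \<and> (\<forall>k'<k. a k' = b k')"
        using spec[OF C, of k] k(1) by blast
      show "(\<forall>k'. Suc k \<le> k' \<and> k' < n \<longrightarrow> \<not> b' k') \<and> b' k \<and> (\<forall>k'<k. a' k' = b' k')"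
        using r k(1) assms(2,3) by simp
    qed
  qed
qed

lemma bits_tau: assumes "distinct ps" "p \<notin> set ps" "j < length ps"
  shows "bits ps (tau ps p i) t j = B (length ps) (t - i) j"
proof -
  have "ps ! j \<noteq> p" using assms(2) nth_mem[OF assms(3)] by auto
  moreover have "(ps ! j = ps ! j' \<and> j' < length ps) \<longleftrightarrow> j' = j" for j'
    using assms(1,3) by (auto simp: nth_eq_iff_index_eq)
  note X = this
  have Y: "ps ! j \<in> {ps ! j' | j'. j' < length ps \<and> B (length ps) (t - i) j'} \<longleftrightarrow> B (length ps) (t - i) j"
  proof
    assume "ps ! j \<in> {ps ! j' | j'. j' < length ps \<and> B (length ps) (t - i) j'}"
    then obtain j' where "ps ! j = ps ! j'" "j' < length ps" "B (length ps) (t - i) j'" by blast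
    with X show "B (length ps) (t - i) j" by metis
  next
    assume "B (length ps) (t - i) j"
    with assms(3) show "ps ! j \<in> {ps ! j' | j'. j' < length ps \<and> B (length ps) (t - i) j'}" by blast
  qed
  have Z: "ps ! j \<notin> (if t = i then {p} else {})" using \<open>ps ! j \<noteq> p\<close> by simp
  show ?thesis unfolding bits_def tau_def Un_iff Y using Z by simp
qed

lemma p_tau: assumes "p \<notin> set ps" shows "p \<in> tau ps p i t \<longleftrightarrow> t = i"
proof -
  have "p \<notin> {ps ! j | j. j < length ps \<and> B (length ps) (t - i) j}"
  proof
    assume "p \<in> {ps ! j | j. j < length ps \<and> B (length ps) (t - i) j}"
    then obtain j where "p = ps ! j" "j < length ps" by blast
    then have "p \<in> set ps" by simp
    with assms show False by contradiction
  qed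
  then show ?thesis unfolding tau_def Un_iff by simp
qed

lemma counter_V: "counter_val ps \<sigma> t = V (bits ps \<sigma> t) (length ps)"
  by (simp add: counter_val_def V_def bits_def)

theorem proposition1:
  fixes ps :: "nat list" and p :: nat and s :: stand
  assumes "length ps \<ge> 1" and "distinct ps" and "p \<notin> set ps" and "s \<noteq> Univ"
  shows "satisfiable (phi_C ps p s) \<and>
    (\<forall>Pi L \<sigma>. is_model Pi L \<and> \<sigma> \<in> Pi \<and> sat Pi L \<sigma> 0 (phi_C ps p s) \<longrightarrow>
       infinite (L s) \<and>
       (\<forall>i > 2 ^ length ps. \<forall>m < 2 ^ length ps. \<exists>\<sigma>'\<in>Pi. counter_val ps \<sigma>' i = m) \<and>
       (\<forall>i > 2 ^ length ps. \<exists>f :: nat \<Rightarrow> trace. (\<forall>j\<in>{1..2 ^ length ps}. f j \<in> Pi) \<and>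
          card ((\<lambda>j. f j i \<inter> set ps) ` {1..2 ^ length ps}) = 2 ^ length ps))"
proof (intro conjI allI impI)
  let ?n = "length ps"
  define Pi where "Pi = range (tau ps p)"
  have model: "is_model Pi (\<lambda>_. Pi)" unfolding is_model_def Pi_def by auto
  have good: "sat Pi (\<lambda>_. Pi) (tau ps p i) i (counter_fml ps)" for i
  proof -
    have "\<forall>j<?n. \<not> bits ps (tau ps p i) i j" using bits_tau[OF assms(2,3)] by simp
    moreover have "STEP ?n (bits ps (tau ps p i) t) (bits ps (tau ps p i) (Suc t))" if "t \<ge> i" for t
    proof -
      have "STEP ?n (B ?n (t - i)) (B ?n (Suc t - i))"
      proof -
        have e: "Suc t - i = Suc (t - i)" using that by (rule Suc_diff_le)
        show ?thesis unfolding e B.simps(2) by (rule STEP_succ)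
      qed
      then show ?thesis
      proof (rule STEP_cong)
        show "\<forall>j<?n. bits ps (tau ps p i) t j = B ?n (t - i) j" using bits_tau[OF assms(2,3)] by blast
        show "\<forall>j<?n. bits ps (tau ps p i) (Suc t) j = B ?n (Suc t - i) j" using bits_tau[OF assms(2,3)] by blast
      qed
    qed
    ultimately show ?thesis by (simp add: sat_counter)
  qed
  show "satisfiable (phi_C ps p s)"
    unfolding satisfiable_def
  proof (intro exI conjI)
    show "is_model Pi (\<lambda>_. Pi)" by (rule model)
    show "tau ps p 0 \<in> Pi" unfolding Pi_def by simp
    show "sat Pi (\<lambda>_. Pi) (tau ps p 0) 0 (phi_C ps p s)"
      unfolding phi_C_def using good p_tau[OF assms(3)] unfolding Pi_def by fastforce
  qed
next
  fix Pi L \<sigma>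
  assume h: "is_model Pi L \<and> \<sigma> \<in> Pi \<and> sat Pi L \<sigma> 0 (phi_C ps p s)"
  let ?n = "length ps"
  have "\<forall>i. \<exists>\<sigma>'\<in>L s. sat Pi L \<sigma>' i (counter_fml ps) \<and> p \<in> \<sigma>' i \<and> (\<forall>t\<ge>Suc i. p \<notin> \<sigma>' t)"
    using h unfolding phi_C_def by simp
  then obtain g where g: "\<And>i. g i \<in> L s" "\<And>i. sat Pi L (g i) i (counter_fml ps)"
     "\<And>i. p \<in> g i i" "\<And>i t. t \<ge> Suc i \<Longrightarrow> p \<notin> g i t"
    by metis
  have LPi: "L s \<subseteq> Pi" using h unfolding is_model_def by blast
  have inj: "inj g"
  proof (rule injI)
    fix i j assume e: "g i = g j"
    show "i = j"
    proof (rule ccontr)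
      assume "i \<noteq> j"
      then have "i < j \<or> j < i" by arith
      then show False using g(3,4) e by (metis Suc_leI)
    qed
  qed
  show "infinite (L s)"
  proof
    assume "finite (L s)"
    then have "finite (range g)" using g(1) by (meson finite_subset image_subsetI)
    then show False using inj finite_imageD by blast
  qed
  have cnt: "counter_val ps (g i) (i + d) = d mod 2 ^ ?n" for i d
  proof (induction d)
    case 0
    then show ?case using g(2)[of i] by (simp add: sat_counter counter_V V_zero)
  next
    case (Suc d)
    have "STEP ?n (bits ps (g i) (i + d)) (bits ps (g i) (Suc (i + d)))"
      using g(2)[of i] by (simp add: sat_counter)
    from incr[OF this] Suc show ?case by (simp add: counter_V mod_Suc_eq)
  qed
  show "\<exists>\<sigma>'\<in>Pi. counter_val ps \<sigma>' i = m" if i: "i > 2 ^ ?n" and m: "m < 2 ^ ?n" for i m :: nat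
  proof -
    have "counter_val ps (g (i - m)) (i - m + m) = m" using cnt m by simp
    then have "counter_val ps (g (i - m)) i = m" using i m by simp
    then show "\<exists>\<sigma>'\<in>Pi. counter_val ps \<sigma>' i = m" using g(1) LPi by blast
  qed
  show "\<exists>f :: nat \<Rightarrow> trace. (\<forall>j\<in>{1..2 ^ ?n}. f j \<in> Pi) \<and>
          card ((\<lambda>j. f j i \<inter> set ps) ` {1..2 ^ ?n}) = 2 ^ ?n" if i: "i > 2 ^ ?n" for i :: nat
  proof -
    define f where "f j = g (i + 1 - j)" for j
    have cv: "counter_val ps (f j) i = j - 1" if "j \<in> {1..2 ^ ?n}" for j
    proof -
      have "counter_val ps (g (i + 1 - j)) (i + 1 - j + (j - 1)) = (j - 1) mod 2 ^ ?n" by (rule cnt)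
      moreover have "j - 1 < 2 ^ ?n" using that by auto
      ultimately show ?thesis using that i unfolding f_def by simp
    qed
    have dep: "counter_val ps \<sigma>1 i = counter_val ps \<sigma>2 i" if "\<sigma>1 i \<inter> set ps = \<sigma>2 i \<inter> set ps" for \<sigma>1 \<sigma>2
    proof -
      have "ps ! j \<in> \<sigma>1 i \<longleftrightarrow> ps ! j \<in> \<sigma>2 i" if "j < ?n" for j
        using \<open>\<sigma>1 i \<inter> set ps = \<sigma>2 i \<inter> set ps\<close> nth_mem[OF that] by blast
      then show ?thesis unfolding counter_val_def by (intro sum.cong) auto
    qed
    have "inj_on (\<lambda>j. f j i \<inter> set ps) {1..2 ^ ?n}"
    proof (rule inj_onI)
      fix a b assume a: "a \<in> {1..2 ^ ?n}" and b: "b \<in> {1..2 ^ ?n}"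
        and e: "f a i \<inter> set ps = f b i \<inter> set ps"
      have "a - 1 = b - 1" using cv[OF a] cv[OF b] dep[of "f a" "f b", OF e] by simp
      then show "a = b" using a b by auto
    qed
    then have "card ((\<lambda>j. f j i \<inter> set ps) ` {1..2 ^ ?n}) = 2 ^ ?n" by (simp add: card_image)
    moreover have "\<forall>j\<in>{1..2 ^ ?n}. f j \<in> Pi" using g(1) LPi unfolding f_def by blast
    ultimately show "\<exists>f :: nat \<Rightarrow> trace. (\<forall>j\<in>{1..2 ^ ?n}. f j \<in> Pi) \<and>
          card ((\<lambda>j. f j i \<inter> set ps) ` {1..2 ^ ?n}) = 2 ^ ?n" by blast
  qed
qed

end
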